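(* Let $\lambda\in\Pi(\mu_1,\ldots,\mu_N)$ and let $\lambda_j=\pi_{\mathcal{P}_j}\#\lambda$ for $j\in\{1,\dots,N\}$. If $\lambda$ is an extreme point of $\Pi(\lambda_{N-1},\mu_N)$ and, for every $j\in\{2,\ldots,N-1\}$, $\lambda_j$ is an extreme point of $\Pi(\lambda_{j-1},\mu_j)$, then $\lambda$ is an extreme point of $\Pi(\mu_1,\ldots,\mu_N)$.
   Context: $N\ge3$; $\mu_k$ are Borel probability measures on complete separable metric spaces $X_k$, $k=1,\dots,N$. $\Pi(\mu_1,\ldots,\mu_N)$ is the convex set of Borel probability measures on $\prod_{k=1}^NX_k$ with $k$-th marginal $\mu_k$. For $j\in\{1,\dots,N\}$, $\pi_{\mathcal{P}_j}:\prod_{k=1}^NX_k\to\prod_{k=1}^jX_k$ is the projection onto the first $j$ coordinates (so $\lambda_1=\mu_1$, $\lambda_N=\lambda$). Writing $\prod_{k=1}^jX_k=Z_j\times X_j$ with $Z_j=\prod_{k=1}^{j-1}X_k$, $\Pi(\lambda_{j-1},\mu_j)$ denotes the set of Borel probability measures on $Z_j\times X_j$ with marginals $\lambda_{j-1}$ on $Z_j$ and $\mu_j$ on $X_j$. An extreme point of a convex set $K$ is a point not expressible as $t\alpha+(1-t)\beta$ with $\alpha\neq\beta$ in $K$, $t\in(0,1)$. *)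

theory Defs
  imports "HOL-Analysis.Analysis" "HOL-Probability.Probability"
begin

definition borel_of :: "'a topology \<Rightarrow> 'a measure" where
  "borel_of T = sigma (topspace T) {U. openin T U}"

definition polish_metric :: "'a metric \<Rightarrow> bool" where
  "polish_metric m \<longleftrightarrow> mcomplete_of m \<and> separable_space (mtopology_of m)"

definition Xsp :: "('i \<Rightarrow> 'a metric) \<Rightarrow> 'i \<Rightarrow> 'a measure" where
  "Xsp X k = borel_of (mtopology_of (X k))"

definition couplings :: "(nat \<Rightarrow> 'a metric) \<Rightarrow> nat \<Rightarrow> (nat \<Rightarrow> 'a measure) \<Rightarrow> (nat \<Rightarrow> 'a) measure set" where
  "couplings X N mu = {P. prob_space P \<and> sets P = sets (PiM {1..N} (Xsp X)) \<and>
      (\<forall>k\<in>{1..N}. distr P (Xsp X k) (\<lambda>x. x k) = mu k)}"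

definition proj_first :: "nat \<Rightarrow> (nat \<Rightarrow> 'a) \<Rightarrow> (nat \<Rightarrow> 'a)" where
  "proj_first j x = restrict x {1..j}"

text \<open>Pi(nu, mu_j): Borel probability measures on Z_j x X_j = prod_{k in {1..j}} X_k
  with marginal nu on Z_j = prod_{k in {1..j-1}} X_k and marginal m on X_j.\<close>
definition couplings2 :: "(nat \<Rightarrow> 'a metric) \<Rightarrow> nat \<Rightarrow> (nat \<Rightarrow> 'a) measure \<Rightarrow> 'a measure \<Rightarrow> (nat \<Rightarrow> 'a) measure set" where
  "couplings2 X j nu m = {P. prob_space P \<and> sets P = sets (PiM {1..j} (Xsp X)) \<and>
      distr P (PiM {1..j-1} (Xsp X)) (proj_first (j-1)) = nu \<and>
      distr P (Xsp X j) (\<lambda>x. x j) = m}"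

definition mix_measure :: "real \<Rightarrow> 'b measure \<Rightarrow> 'b measure \<Rightarrow> 'b measure" where
  "mix_measure t a b = measure_of (space a) (sets a)
      (\<lambda>A. ennreal t * emeasure a A + ennreal (1 - t) * emeasure b A)"

definition is_extreme_point :: "'b measure set \<Rightarrow> 'b measure \<Rightarrow> bool" where
  "is_extreme_point KK nu \<longleftrightarrow> nu \<in> KK \<and>
     \<not> (\<exists>al\<in>KK. \<exists>be\<in>KK. \<exists>t. 0 < (t::real) \<and> t < 1 \<and> al \<noteq> be \<and> nu = mix_measure t al be)"

end

theory Submission
  imports Defs
begin

lemma mix_space[simp]: "space (mix_measure t a b) = space a"
  by (simp add: mix_measure_def)

lemma mix_sets[simp]: "sets (mix_measure t a b) = sets a"
  by (simp add: mix_measure_def)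

lemma emeasure_mix:
  assumes "sets b = sets a"
  shows "emeasure (mix_measure t a b) A = ennreal t * emeasure a A + ennreal (1-t) * emeasure b A"
    (is "_ = ?\<mu> A")
proof (cases "A \<in> sets a")
  case True
  show ?thesis unfolding mix_measure_def
  proof (rule emeasure_measure_of_sigma)
    show "sigma_algebra (space a) (sets a)" ..
    show "positive (sets a) ?\<mu>" by (simp add: positive_def)
    show "countably_additive (sets a) ?\<mu>"
    proof (rule countably_additiveI)
      fix A :: "nat \<Rightarrow> _"  assume *: "range A \<subseteq> sets a" "disjoint_family A"
      have "(\<Sum>i. ?\<mu> (A i)) = ennreal t * (\<Sum>i. emeasure a (A i)) + ennreal (1-t) * (\<Sum>i. emeasure b (A i))"
        by (simp add: suminf_add[symmetric])
      also have "\<dots> = ?\<mu> (\<Union>i. A i)" using * assms by (simp add: suminf_emeasure)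
      finally show "(\<Sum>i. ?\<mu> (A i)) = ?\<mu> (\<Union>i. A i)" .
    qed
  qed (fact True)
next
  case False
  then show ?thesis using assms by (simp add: emeasure_notin_sets)
qed

lemma mix_same:
  assumes "0 \<le> t" "t \<le> 1"
  shows "mix_measure t a a = a"
proof (rule measure_eqI)
  fix A
  have "ennreal t * emeasure a A + ennreal (1-t) * emeasure a A = (ennreal t + ennreal (1-t)) * emeasure a A"
    by (simp add: distrib_right)
  also have "ennreal t + ennreal (1-t) = 1" using assms by (simp add: ennreal_plus[symmetric])
  finally show "emeasure (mix_measure t a a) A = emeasure a A" by (simp add: emeasure_mix)
qed simp

lemma distr_mix:
  assumes f: "f \<in> measurable a M" and s: "sets b = sets a"
  shows "distr (mix_measure t a b) M f = mix_measure t (distr a M f) (distr b M f)"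
proof (rule measure_eqI)
  show "sets (distr (mix_measure t a b) M f) = sets (mix_measure t (distr a M f) (distr b M f))" by simp
next
  fix A assume A: "A \<in> sets (distr (mix_measure t a b) M f)"
  have fm: "f \<in> measurable (mix_measure t a b) M" using f measurable_cong_sets[of "mix_measure t a b" a M M] by simp
  have fb: "f \<in> measurable b M" using f measurable_cong_sets[OF s refl] by metis
  have sp: "space b = space a" using s by (rule sets_eq_imp_space_eq)
  show "emeasure (distr (mix_measure t a b) M f) A = emeasure (mix_measure t (distr a M f) (distr b M f)) A"
    using A fm f fb sp s by (simp add: emeasure_distr emeasure_mix)
qed

lemma pf_meas:
  assumes "sets P = sets (PiM {1..N} M)" "j \<le> N"
  shows "proj_first j \<in> measurable P (PiM {1..j} M)"
proof -
  have "{1..j} \<subseteq> {1..N}" using assms(2) by auto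
  then have "(\<lambda>f. restrict f {1..j}) \<in> measurable (PiM {1..N} M) (PiM {1..j} M)"
    by (rule measurable_restrict_subset)
  then show ?thesis unfolding proj_first_def using measurable_cong_sets[OF assms(1) refl] by metis
qed

lemma coord_meas:
  assumes "sets P = sets (PiM {1..N} M)" "k \<in> {1..N}"
  shows "(\<lambda>x. x k) \<in> measurable P (M k)"
  using measurable_cong_sets[OF assms(1) refl] measurable_component_singleton[OF assms(2), of M]
  by auto

lemma pf_pf: "j' \<le> j \<Longrightarrow> proj_first j' (proj_first j x) = proj_first j' x"
  unfolding proj_first_def by (auto simp: restrict_def)

theorem mainTheorem3:
  fixes X :: "nat \<Rightarrow> 'a metric" and mu :: "nat \<Rightarrow> 'a measure"
    and N :: nat and lam :: "(nat \<Rightarrow> 'a) measure"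
  assumes "N \<ge> 3"
    and "\<forall>k\<in>{1..N}. polish_metric (X k)"
    and "\<forall>k\<in>{1..N}. prob_space (mu k) \<and> sets (mu k) = sets (Xsp X k)"
    and "lam \<in> couplings X N mu"
    and "is_extreme_point
           (couplings2 X N (distr lam (PiM {1..N-1} (Xsp X)) (proj_first (N-1))) (mu N)) lam"
    and "\<forall>j\<in>{2..N-1}. is_extreme_point
           (couplings2 X j (distr lam (PiM {1..j-1} (Xsp X)) (proj_first (j-1))) (mu j))
           (distr lam (PiM {1..j} (Xsp X)) (proj_first j))"
  shows "is_extreme_point (couplings X N mu) lam"
proof -
  define Pm where "Pm j = PiM {1..j} (Xsp X)" for j
  define L where "L j = distr lam (Pm j) (proj_first j)" for j
  have proj_in: "distr P (Pm j) (proj_first j) \<in> couplings2 X j (distr P (Pm (j-1)) (proj_first (j-1))) (mu j)"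
    if P: "P \<in> couplings X N mu" and j: "1 \<le> j" "j \<le> N" for P j
  proof -
    have ps: "prob_space P" and sP: "sets P = sets (Pm N)"
      and mar: "\<forall>k\<in>{1..N}. distr P (Xsp X k) (\<lambda>x. x k) = mu k"
      using P by (auto simp: couplings_def Pm_def)
    have m1: "proj_first j \<in> measurable P (Pm j)" using pf_meas[OF sP[unfolded Pm_def] j(2)] by (simp add: Pm_def)
    have m2: "proj_first (j-1) \<in> measurable (Pm j) (Pm (j-1))"
      using pf_meas[of "Pm j" j "Xsp X" "j-1"] by (simp add: Pm_def)
    have m3: "(\<lambda>x. x j) \<in> measurable (Pm j) (Xsp X j)"
      using coord_meas[of "Pm j" j "Xsp X" j] j by (simp add: Pm_def)
    have m4: "(\<lambda>x. x j) \<in> measurable P (Xsp X j)"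
      using coord_meas[OF sP[unfolded Pm_def], of j] j by simp
    have "distr (distr P (Pm j) (proj_first j)) (Pm (j-1)) (proj_first (j-1))
          = distr P (Pm (j-1)) (proj_first (j-1) \<circ> proj_first j)"
      using distr_distr[OF m2 m1] .
    also have "proj_first (j-1) \<circ> proj_first j = proj_first (j-1)"
      by (rule ext) (simp add: pf_pf)
    finally have e1: "distr (distr P (Pm j) (proj_first j)) (Pm (j-1)) (proj_first (j-1)) = distr P (Pm (j-1)) (proj_first (j-1))" .
    have "distr (distr P (Pm j) (proj_first j)) (Xsp X j) (\<lambda>x. x j)
          = distr P (Xsp X j) ((\<lambda>x. x j) \<circ> proj_first j)"
      using distr_distr[OF m3 m1] .
    also have "(\<lambda>x. x j) \<circ> proj_first j = (\<lambda>x. x j)"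
      using j by (auto simp: proj_first_def)
    finally have e2: "distr (distr P (Pm j) (proj_first j)) (Xsp X j) (\<lambda>x. x j) = mu j"
      using mar j by simp
    have "prob_space (distr P (Pm j) (proj_first j))"
      using prob_space.prob_space_distr[OF ps m1] .
    then show ?thesis using e1 e2 unfolding couplings2_def Pm_def by simp
  qed
  have base1: "distr P (Pm 1) (proj_first 1) = distr (mu 1) (Pm 1) (\<lambda>y. \<lambda>k\<in>{1..1}. y)"
    if P: "P \<in> couplings X N mu" for P
  proof -
    have sP: "sets P = sets (Pm N)" and mar: "distr P (Xsp X 1) (\<lambda>x. x 1) = mu 1"
      using P assms(1) by (auto simp: couplings_def Pm_def)
    have m4: "(\<lambda>x. x 1) \<in> measurable P (Xsp X 1)"
      using coord_meas[OF sP[unfolded Pm_def], of 1] assms(1) by simp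
    have m5: "(\<lambda>y. \<lambda>k\<in>{1..1}. y) \<in> measurable (Xsp X 1) (Pm 1)"
      unfolding Pm_def by (rule measurable_restrict) auto
    have "distr (distr P (Xsp X 1) (\<lambda>x. x 1)) (Pm 1) (\<lambda>y. \<lambda>k\<in>{1..1}. y)
        = distr P (Pm 1) ((\<lambda>y. \<lambda>k\<in>{1..1}. y) \<circ> (\<lambda>x. x 1))"
      using distr_distr[OF m5 m4] .
    also have "(\<lambda>y. \<lambda>k\<in>{1..1}. y) \<circ> (\<lambda>x. x 1) = proj_first 1"
      by (rule ext) (auto simp: proj_first_def restrict_def)
    finally have "distr (mu 1) (Pm 1) (\<lambda>y. \<lambda>k\<in>{1..1}. y) = distr P (Pm 1) (proj_first 1)"
      by (simp only: mar)
    then show ?thesis by (rule sym)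
  qed
  have lamC: "lam \<in> couplings X N mu" by fact
  show ?thesis
    unfolding is_extreme_point_def
  proof (intro conjI notI)
    show "lam \<in> couplings X N mu" by fact
  next
    assume "\<exists>al\<in>couplings X N mu. \<exists>be\<in>couplings X N mu. \<exists>t. 0 < t \<and> t < 1 \<and> al \<noteq> be \<and> lam = mix_measure t al be"
    then obtain al be t where al: "al \<in> couplings X N mu" and be: "be \<in> couplings X N mu"
      and t: "0 < t" "t < 1" and ne: "al \<noteq> be" and lm: "lam = mix_measure t al be" by blast
    have sal: "sets al = sets (Pm N)" and sbe: "sets be = sets (Pm N)"
      using al be by (auto simp: couplings_def Pm_def)
    have key: "j \<le> N - 1 \<longrightarrow> distr al (Pm j) (proj_first j) = L j \<and> distr be (Pm j) (proj_first j) = L j"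
      if "1 \<le> j" for j
      using that
    proof (induction j rule: dec_induct)
      case base
      show ?case using base1[OF al] base1[OF be] base1[OF lamC] by (simp add: L_def)
    next
      case (step j)
      show ?case
      proof
        assume jN: "Suc j \<le> N - 1"
        let ?j = "Suc j"
        from step.IH jN have ih: "distr al (Pm j) (proj_first j) = L j" "distr be (Pm j) (proj_first j) = L j" by auto
        have ca: "distr al (Pm ?j) (proj_first ?j) \<in> couplings2 X ?j (L j) (mu ?j)"
          using proj_in[OF al, of ?j] jN ih by simp
        have cb: "distr be (Pm ?j) (proj_first ?j) \<in> couplings2 X ?j (L j) (mu ?j)"
          using proj_in[OF be, of ?j] jN ih by simp
        have ext: "is_extreme_point (couplings2 X ?j (L j) (mu ?j)) (L ?j)"
        proof -
          have "Suc j \<in> {2..N-1}" using jN step.hyps by auto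
          from bspec[OF assms(6) this] show ?thesis by (simp add: L_def Pm_def)
        qed
        have m1: "proj_first ?j \<in> measurable al (Pm ?j)"
          using pf_meas[OF sal[unfolded Pm_def], of ?j] jN by (simp add: Pm_def)
        have sb: "sets be = sets al" using sal sbe by simp
        have mixL: "L ?j = mix_measure t (distr al (Pm ?j) (proj_first ?j)) (distr be (Pm ?j) (proj_first ?j))"
          unfolding L_def lm by (rule distr_mix[OF m1 sb])
        have eq: "distr al (Pm ?j) (proj_first ?j) = distr be (Pm ?j) (proj_first ?j)"
        proof (rule ccontr)
          assume "\<not> ?thesis"
          then show False using ext ca cb t mixL unfolding is_extreme_point_def by blast
        qed
        have "L ?j = distr al (Pm ?j) (proj_first ?j)"
          using mixL eq t by (simp add: mix_same)
        then show "distr al (Pm ?j) (proj_first ?j) = L ?j \<and> distr be (Pm ?j) (proj_first ?j) = L ?j"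
          using eq by simp
      qed
    qed
    have N1: "1 \<le> N - 1" using assms(1) by simp
    have kN: "distr al (Pm (N-1)) (proj_first (N-1)) = L (N-1)" "distr be (Pm (N-1)) (proj_first (N-1)) = L (N-1)"
      using key[OF N1] by auto
    have idN: "distr P (Pm N) (proj_first N) = P" if "P \<in> couplings X N mu" for P
    proof -
      have sP: "sets P = sets (Pm N)" using that by (auto simp: couplings_def Pm_def)
      have "distr P (Pm N) (proj_first N) = distr P P (\<lambda>x. x)"
      proof (rule distr_cong_AE)
        show "AE x in P. proj_first N x = x"
        proof (rule AE_I2)
          fix x assume "x \<in> space P"
          then have "x \<in> space (Pm N)" using sets_eq_imp_space_eq[OF sP] by simp
          then show "proj_first N x = x" unfolding Pm_def proj_first_def
            by (auto simp: space_PiM PiE_def extensional_def restrict_def)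
        qed
      qed (use pf_meas[OF sP[unfolded Pm_def], of N] in \<open>auto simp: sP Pm_def\<close>)
      then show ?thesis by simp
    qed
    have ca: "al \<in> couplings2 X N (L (N-1)) (mu N)"
      using proj_in[OF al, of N] assms(1) kN idN[OF al] by (simp add: L_def[symmetric])
    have cb: "be \<in> couplings2 X N (L (N-1)) (mu N)"
      using proj_in[OF be, of N] assms(1) kN idN[OF be] by simp
    show False using assms(5) ca cb t ne lm unfolding is_extreme_point_def L_def Pm_def by blast
  qed
qed

end
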